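(* Let $n\ge2$, $d\ge1$, $r\ge3$ with $n\ge d$ and $dr\equiv0\pmod n$. Then $Q_n(d,r)$ is $G$-orbit proportional if and only if $n\equiv 0\pmod d$.
   Context: $\mathbb{Z}_2^n=\{0,1\}^n$ with coordinatewise addition mod 2; $e_i$ is the $i$-th standard basis vector, subscripts read modulo $n$; $\sigma^j(b)$ is the vector with $\sigma^j(b)_{i+j}=b_i$ (indices mod $n$). $G$ is the group on $\mathbb{Z}_2^n\times\mathbb{Z}_r$ with multiplication $(a,x)(b,y)=(a+\sigma^{dx}(b),x+y)$; $Q_n(d,r)$ is its Cayley graph with connection set $\{(0_n,1),(0_n,r-1),(e_1,0),\dots,(e_d,0)\}$, so $(a,x)$ is adjacent to $(a+e_{i+dx},x)$ for $1\le i\le d$ and to $(a,x\pm1)$. $G$ acts on the graph by left multiplication $u\mapsto gu$, and its orbits on edges are $E_0=\{\{(a,x),(a,x+1)\}\}$ and $E_i=\{\{(a,x),(a+e_{i+dx},x)\}\}$, $1\le i\le d$. A graph $X$ with edge partition into $H$-orbits $E_0,\dots,E_k$ is $H$-orbit proportional if for every pair of vertices $u,v$, every shortest $u$–$v$ path $P$ and every $u$–$v$ path $P'$ satisfy $|E(P)\cap E_i|\le|E(P')\cap E_i|$ for all $i$. *)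

theory Defs
  imports Main
begin

(* Z_2^n is modelled as subsets of {0..<n} (a \<subseteq> {0..<n} is the support of a
   0/1 vector), addition is symmetric difference; the standard basis vector e_i
   (subscript read modulo n) is {i mod n}. *)

definition symdiff :: "nat set \<Rightarrow> nat set \<Rightarrow> nat set" where
  "symdiff a b = (a - b) \<union> (b - a)"

definition ebasis :: "nat \<Rightarrow> nat \<Rightarrow> nat set" where
  "ebasis n i = {i mod n}"

type_synonym vert = "nat set \<times> nat"

definition Qverts :: "nat \<Rightarrow> nat \<Rightarrow> vert set" where
  "Qverts n r = {(a, x). a \<subseteq> {0..<n} \<and> x < r}"

definition Qorbit :: "nat \<Rightarrow> nat \<Rightarrow> nat \<Rightarrow> nat \<Rightarrow> vert set set" where
  "Qorbit n d r i =
     (if i = 0 then {{(a, x), (a, (x + 1) mod r)} | a x. (a, x) \<in> Qverts n r}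
      else {{(a, x), (symdiff a (ebasis n (i + d * x)), x)} | a x. (a, x) \<in> Qverts n r})"

definition Qedges :: "nat \<Rightarrow> nat \<Rightarrow> nat \<Rightarrow> vert set set" where
  "Qedges n d r = (\<Union>i\<in>{0..d}. Qorbit n d r i)"

definition path_edges :: "'v list \<Rightarrow> 'v set set" where
  "path_edges P = {{P ! k, P ! Suc k} | k. Suc k < length P}"

definition is_path :: "'v set \<Rightarrow> 'v set set \<Rightarrow> 'v list \<Rightarrow> 'v \<Rightarrow> 'v \<Rightarrow> bool" where
  "is_path V E P u v \<longleftrightarrow>
     P \<noteq> [] \<and> hd P = u \<and> last P = v \<and> distinct P \<and> set P \<subseteq> V \<and>
     (\<forall>k. Suc k < length P \<longrightarrow> {P ! k, P ! Suc k} \<in> E)"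

definition is_shortest_path :: "'v set \<Rightarrow> 'v set set \<Rightarrow> 'v list \<Rightarrow> 'v \<Rightarrow> 'v \<Rightarrow> bool" where
  "is_shortest_path V E P u v \<longleftrightarrow>
     is_path V E P u v \<and> (\<forall>P'. is_path V E P' u v \<longrightarrow> length P \<le> length P')"

definition orbit_proportional ::
  "'v set \<Rightarrow> 'v set set \<Rightarrow> 'i set \<Rightarrow> ('i \<Rightarrow> 'v set set) \<Rightarrow> bool" where
  "orbit_proportional V E I Orb \<longleftrightarrow>
     (\<forall>u v P P'. is_shortest_path V E P u v \<longrightarrow> is_path V E P' u v \<longrightarrow>
        (\<forall>i\<in>I. card (path_edges P \<inter> Orb i) \<le> card (path_edges P' \<inter> Orb i)))"

definition Q_G_orbit_proportional :: "nat \<Rightarrow> nat \<Rightarrow> nat \<Rightarrow> bool" where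
  "Q_G_orbit_proportional n d r =
     orbit_proportional (Qverts n r) (Qedges n d r) {0..d} (Qorbit n d r)"

end

theory Submission
  imports Defs
begin


lemma succ_nth: "(\<forall>k. Suc k < length xs \<longrightarrow> R (xs!k) (xs!Suc k)) \<Longrightarrow> successively R xs"
proof (induction xs)
  case (Cons x xs)
  then show ?case
  proof (cases xs)
    case (Cons y ys)
    have "\<forall>k. Suc k < length xs \<longrightarrow> R (xs!k) (xs!Suc k)"
    proof (intro allI impI)
      fix k assume "Suc k < length xs"
      then show "R (xs!k) (xs!Suc k)" using Cons.prems[rule_format, of "Suc k"] by simp
    qed
    then show ?thesis using Cons.IH Cons.prems[rule_format, of 0] \<open>xs = y#ys\<close> by simp
  qed simp
qed simp

lemma nth_succ: "successively R xs \<Longrightarrow> Suc k < length xs \<Longrightarrow> R (xs!k) (xs!Suc k)"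
proof (induction xs arbitrary: k)
  case (Cons x xs)
  then show ?case by (cases xs; cases k) (auto simp: successively_Cons)
qed simp

lemma sd_self: "symdiff a (symdiff a b) = b" by (auto simp: symdiff_def)
lemma sd_self2: "symdiff (symdiff a b) b = a" by (auto simp: symdiff_def)
lemma sd_disj: "S1 \<inter> S2 = {} \<Longrightarrow> symdiff (symdiff a S1) S2 = symdiff a (S1 \<union> S2)"
  by (auto simp: symdiff_def)
lemma sd_empty[simp]: "symdiff a {} = a" by (auto simp: symdiff_def)
lemma sd_ins: "c \<notin> S \<Longrightarrow> symdiff (symdiff a S) {c} = symdiff a (insert c S)"
  by (auto simp: symdiff_def)
lemma sd_sub: "a \<subseteq> A \<Longrightarrow> b \<subseteq> A \<Longrightarrow> symdiff a b \<subseteq> A" by (auto simp: symdiff_def)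
lemma sd_ne: "symdiff a {c} \<noteq> a" by (auto simp: symdiff_def)

fun elist :: "'v list \<Rightarrow> 'v set list" where
  "elist (p#q#rest) = {p,q} # elist (q#rest)"
| "elist _ = []"

locale Q =
  fixes n d r :: nat
  assumes n2: "n \<ge> 2" and d1: "d \<ge> 1" and r3: "r \<ge> 3" and dn: "d \<le> n"
begin

abbreviation "V \<equiv> Qverts n r"
abbreviation "E \<equiv> Qedges n d r"
abbreviation "Ob \<equiv> Qorbit n d r"

lemma O0_iff: "e \<in> Ob 0 \<longleftrightarrow> (\<exists>a x. a \<subseteq> {0..<n} \<and> x < r \<and> e = {(a,x),(a,(x+1) mod r)})"
  by (auto simp: Qorbit_def Qverts_def)

lemma Oi_iff: "i \<noteq> 0 \<Longrightarrow> e \<in> Ob i \<longleftrightarrow>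
   (\<exists>a x. a \<subseteq> {0..<n} \<and> x < r \<and> e = {(a,x),(symdiff a {(i+d*x) mod n},x)})"
  by (auto simp: Qorbit_def Qverts_def ebasis_def)

lemma E_iff: "e \<in> E \<longleftrightarrow> (\<exists>i\<in>{0..d}. e \<in> Ob i)"
  by (auto simp: Qedges_def)

definition flipok :: "nat \<Rightarrow> nat \<Rightarrow> bool" where
  "flipok x c \<longleftrightarrow> (\<exists>i\<in>{1..d}. c = (i + d*x) mod n)"

definition walk :: "vert list \<Rightarrow> bool" where
  "walk W \<longleftrightarrow> W \<noteq> [] \<and> set W \<subseteq> V \<and> successively (\<lambda>p q. {p,q} \<in> E) W"

lemma path_walk: "is_path V E P u v \<Longrightarrow> walk P \<and> hd P = u \<and> last P = v \<and> distinct P"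
  unfolding is_path_def walk_def by (auto intro: succ_nth)

lemma succ_split: "successively R (xs @ y # zs) \<longleftrightarrow> successively R (xs @ [y]) \<and> successively R (y # zs)"
  by (simp add: successively_append_iff) blast

lemma walk_path: "walk W \<Longrightarrow> \<exists>P. is_path V E P (hd W) (last W) \<and> length P \<le> length W"
proof (induction "length W" arbitrary: W rule: less_induct)
  case less
  have w: "W \<noteq> []" "set W \<subseteq> V" "successively (\<lambda>p q. {p,q} \<in> E) W" using less.prems unfolding walk_def by auto
  show ?case
  proof (cases "distinct W")
    case True
    have "\<forall>k. Suc k < length W \<longrightarrow> {W!k, W!Suc k} \<in> E" using w(3) nth_succ by blast
    then have "is_path V E W (hd W) (last W)" using w True unfolding is_path_def by blast
    then show ?thesis by blast
  next
    case False
    then obtain xs ys zs y where W: "W = xs@[y]@ys@[y]@zs" using not_distinct_decomp by blast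
    define W' where "W' = xs@y#zs"
    have W1: "W = xs @ y # (ys @ y # zs)" "W = (xs @ y # ys) @ y # zs" using W by auto
    have s1: "successively (\<lambda>p q. {p,q} \<in> E) (xs @ [y])"
      using w(3) succ_split[of _ xs y "ys @ y # zs"] W1(1) by metis
    have s2: "successively (\<lambda>p q. {p,q} \<in> E) (y # zs)"
      using w(3) succ_split[of _ "xs @ y # ys" y zs] W1(2) by metis
    have "successively (\<lambda>p q. {p,q} \<in> E) W'" unfolding W'_def using s1 s2 succ_split by metis
    moreover have "set W' \<subseteq> V" using w(2) unfolding W W'_def by auto
    ultimately have "walk W'" unfolding walk_def W'_def by simp
    moreover have "length W' < length W" by (simp add: W W'_def)
    moreover have "hd W' = hd W" by (cases xs) (auto simp: W W'_def)
    moreover have "last W' = last W" by (cases zs rule: rev_cases) (auto simp: W W'_def)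
    ultimately obtain P where "is_path V E P (hd W') (last W')" "length P \<le> length W'"
      using less(1)[of W'] by blast
    then show ?thesis using \<open>hd W' = hd W\<close> \<open>last W' = last W\<close> \<open>length W' < length W\<close>
      by (intro exI[of _ P]) simp
  qed
qed

lemma edge_cases:
  assumes "{p,q} \<in> E"
  shows "(fst p = fst q \<and> snd p \<noteq> snd q \<and> {p,q} \<in> Ob 0 \<and>
            (snd q = (snd p + 1) mod r \<or> snd p = (snd q + 1) mod r)) \<or>
         (snd p = snd q \<and> (\<exists>c. flipok (snd p) c \<and> fst q = symdiff (fst p) {c}))"
proof -
  obtain i where i: "i \<in> {0..d}" "{p,q} \<in> Ob i" using assms unfolding E_iff by blast
  show ?thesis
  proof (cases "i = 0")
    case True
    from i(2) True have "{p,q} \<in> Ob 0" by simp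
    then obtain a x where ax: "a \<subseteq> {0..<n}" "x < r" "{p,q} = {(a,x),(a,(x+1) mod r)}"
      unfolding O0_iff by blast
    have ne: "x \<noteq> (x+1) mod r"
    proof (cases "x+1 < r")
      case True then show ?thesis by simp
    next
      case False then have "x + 1 = r" using ax(2) by simp
      then show ?thesis using r3 by simp
    qed
    have o0: "{p,q} \<in> Ob 0" using i True by simp
    have "p = (a,x) \<and> q = (a,(x+1) mod r) \<or> q = (a,x) \<and> p = (a,(x+1) mod r)"
      using ax(3) by (simp add: doubleton_eq_iff) blast
    then show ?thesis
    proof
      assume "p = (a,x) \<and> q = (a,(x+1) mod r)"
      then show ?thesis using ne o0 by simp
    next
      assume "q = (a,x) \<and> p = (a,(x+1) mod r)"
      then show ?thesis using ne o0 by simp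
    qed
  next
    case False
    from i(2) obtain a x where ax: "a \<subseteq> {0..<n}" "x < r" "{p,q} = {(a,x),(symdiff a {(i+d*x) mod n},x)}"
      unfolding Oi_iff[OF False] by blast
    have fo: "flipok x ((i+d*x) mod n)" using False i unfolding flipok_def by (intro bexI[of _ i]) auto
    have "p = (a,x) \<and> q = (symdiff a {(i+d*x) mod n},x) \<or> q = (a,x) \<and> p = (symdiff a {(i+d*x) mod n},x)"
      using ax(3) by (simp add: doubleton_eq_iff) blast
    then show ?thesis
    proof
      assume "p = (a,x) \<and> q = (symdiff a {(i+d*x) mod n},x)"
      then show ?thesis using fo by auto
    next
      assume "q = (a,x) \<and> p = (symdiff a {(i+d*x) mod n},x)"
      then have "fst p = symdiff (fst q) {(i+d*x) mod n}" "snd p = snd q" "snd q = x"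
        by (auto simp: sd_self)
      then have "fst q = symdiff (fst p) {(i+d*x) mod n}" by (simp add: sd_self2)
      then show ?thesis using fo \<open>snd p = snd q\<close> \<open>snd q = x\<close> by auto
    qed
  qed
qed

lemma flipok_lt: "flipok x c \<Longrightarrow> c < n"
  unfolding flipok_def using n2 by auto

lemma flip_edge: "a \<subseteq> {0..<n} \<Longrightarrow> x < r \<Longrightarrow> flipok x c \<Longrightarrow> {(a,x),(symdiff a {c},x)} \<in> E"
proof -
  assume a: "a \<subseteq> {0..<n}" "x < r" "flipok x c"
  then obtain i where i: "i \<in> {1..d}" "c = (i + d*x) mod n" unfolding flipok_def by blast
  have "i \<noteq> 0" using i by auto
  have "{(a,x),(symdiff a {c},x)} \<in> Ob i" unfolding Oi_iff[OF \<open>i \<noteq> 0\<close>]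
    by (rule exI[of _ a], rule exI[of _ x]) (use a i in auto)
  then show ?thesis unfolding E_iff using i by (intro bexI[of _ i]) auto
qed

lemma hor_edge: "a \<subseteq> {0..<n} \<Longrightarrow> x < r \<Longrightarrow> {(a,x),(a,(x+1) mod r)} \<in> Ob 0"
  unfolding O0_iff by blast

lemma hor_edgeE: "a \<subseteq> {0..<n} \<Longrightarrow> x < r \<Longrightarrow> {(a,x),(a,(x+1) mod r)} \<in> E"
  unfolding E_iff using hor_edge by (intro bexI[of _ 0]) auto

lemma flips:
  assumes "finite S" "\<forall>c\<in>S. flipok x c" "a \<subseteq> {0..<n}" "x < r"
  shows "\<exists>W. walk W \<and> hd W = (a,x) \<and> last W = (symdiff a S, x) \<and> length W \<le> 1 + card S"
  using assms
proof (induction S rule: finite_induct)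
  case empty
  then show ?case by (intro exI[of _ "[(a,x)]"]) (auto simp: walk_def Qverts_def)
next
  case (insert c S)
  then obtain W where W: "walk W" "hd W = (a,x)" "last W = (symdiff a S, x)" "length W \<le> 1 + card S"
    by auto
  have sub: "symdiff a S \<subseteq> {0..<n}" using W(1,3) unfolding walk_def Qverts_def
    by (metis (no_types, lifting) case_prodD last_in_set mem_Collect_eq subset_iff)
  have fc: "flipok x c" using insert by auto
  have sub2: "symdiff (symdiff a S) {c} \<subseteq> {0..<n}" using sub flipok_lt[OF fc] by (auto simp: symdiff_def)
  have e: "{(symdiff a S, x), (symdiff (symdiff a S) {c}, x)} \<in> E"
    using flip_edge[OF sub \<open>x < r\<close> fc] .
  show ?case
  proof (intro exI[of _ "W @ [(symdiff (symdiff a S) {c}, x)]"] conjI)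
    show "walk (W @ [(symdiff (symdiff a S) {c}, x)])"
      using W e sub2 insert.prems unfolding walk_def
      by (auto simp: successively_append_iff Qverts_def)
  qed (use W insert sd_ins in \<open>auto simp: walk_def\<close>)
qed

lemma key:
  assumes "walk QQ" "finite S" "\<forall>c\<in>S. \<exists>p\<in>set QQ. flipok (snd p) c" "a \<subseteq> {0..<n}"
  shows "\<exists>W. walk W \<and> hd W = (a, snd (hd QQ)) \<and> last W = (symdiff a S, snd (last QQ)) \<and>
             length W \<le> 1 + length (filter (\<lambda>e. e \<in> Ob 0) (elist QQ)) + card S"
  using assms
proof (induction QQ arbitrary: a S rule: elist.induct)
  case (1 p q rest)
  have wq: "walk (q#rest)" using "1.prems"(1) unfolding walk_def by auto
  have epq: "{p,q} \<in> E" using "1.prems"(1) unfolding walk_def by auto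
  have pV: "snd p < r" using "1.prems"(1) unfolding walk_def Qverts_def by auto
  show ?case
  proof (cases "snd p = snd q")
    case True
    have "\<forall>c\<in>S. \<exists>p'\<in>set (q#rest). flipok (snd p') c" using "1.prems"(3) True by auto
    then obtain W where W: "walk W" "hd W = (a, snd (hd (q#rest)))"
       "last W = (symdiff a S, snd (last (q#rest)))"
       "length W \<le> 1 + length (filter (\<lambda>e. e \<in> Ob 0) (elist (q#rest))) + card S"
      using "1.IH"[OF wq "1.prems"(2) _ "1.prems"(4)] by blast
    show ?thesis using W True by (intro exI[of _ W]) auto
  next
    case False
    then have h: "{p,q} \<in> Ob 0" "snd q = (snd p + 1) mod r \<or> snd p = (snd q + 1) mod r"
      using edge_cases[OF epq] by auto
    define S1 where "S1 = {c\<in>S. flipok (snd p) c}"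
    define S2 where "S2 = S - S1"
    have fS1: "finite S1" "finite S2" using "1.prems"(2) by (auto simp: S1_def S2_def)
    obtain W1 where W1: "walk W1" "hd W1 = (a, snd p)" "last W1 = (symdiff a S1, snd p)"
        "length W1 \<le> 1 + card S1"
      using flips[OF fS1(1) _ "1.prems"(4) pV] by (auto simp: S1_def)
    have sub: "symdiff a S1 \<subseteq> {0..<n}" using W1(1,3) unfolding walk_def Qverts_def
      by (metis (no_types, lifting) case_prodD last_in_set mem_Collect_eq subset_iff)
    have "\<forall>c\<in>S2. \<exists>p'\<in>set (q#rest). flipok (snd p') c" using "1.prems"(3)
      by (auto simp: S1_def S2_def)
    then obtain W2 where W2: "walk W2" "hd W2 = (symdiff a S1, snd (hd (q#rest)))"
       "last W2 = (symdiff (symdiff a S1) S2, snd (last (q#rest)))"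
       "length W2 \<le> 1 + length (filter (\<lambda>e. e \<in> Ob 0) (elist (q#rest))) + card S2"
      using "1.IH"[OF wq fS1(2) _ sub] by blast
    have qV: "snd q < r" using wq unfolding walk_def Qverts_def by auto
    have e: "{(symdiff a S1, snd p), (symdiff a S1, snd q)} \<in> E"
      using h(2) hor_edgeE[OF sub pV] hor_edgeE[OF sub qV] by (auto simp: insert_commute)
    have "S = S1 \<union> S2" "S1 \<inter> S2 = {}" by (auto simp: S1_def S2_def)
    then have cs: "card S = card S1 + card S2" using fS1 card_Un_disjoint by metis
    have sS: "symdiff (symdiff a S1) S2 = symdiff a S"
    proof -
      have "S1 \<inter> S2 = {}" "S1 \<union> S2 = S" by (auto simp: S1_def S2_def)
      then show ?thesis using sd_disj by metis
    qed
    show ?thesis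
    proof (intro exI[of _ "W1 @ W2"] conjI)
      show "walk (W1 @ W2)" using W1 W2 e unfolding walk_def
        by (auto simp: successively_append_iff)
      show "hd (W1 @ W2) = (a, snd (hd (p # q # rest)))" using W1 unfolding walk_def by simp
      show "last (W1 @ W2) = (symdiff a S, snd (last (p # q # rest)))" using W2 sS unfolding walk_def by simp
      show "length (W1 @ W2) \<le> 1 + length (filter (\<lambda>e. e \<in> Ob 0) (elist (p # q # rest))) + card S"
        using W1(4) W2(4) h(1) cs by simp
    qed
  qed
next
  case "2_1"
  then show ?case by (simp add: walk_def)
next
  case ("2_2" v)
  then have "\<forall>c\<in>S. flipok (snd v) c" "snd v < r" unfolding walk_def Qverts_def by auto
  then show ?case using flips[OF "2_2.prems"(2) _ "2_2.prems"(4)] by auto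
qed

end



lemma elist_len: "length (elist P) = length P - 1"
  by (induction P rule: elist.induct) auto

lemma elist_nth: "Suc k < length P \<Longrightarrow> elist P ! k = {P!k, P!Suc k}"
proof (induction P arbitrary: k rule: elist.induct)
  case (1 p q rest)
  then show ?case by (cases k) auto
qed auto

lemma elist_set: "set (elist P) = path_edges P"
proof
  show "set (elist P) \<subseteq> path_edges P"
  proof
    fix e assume "e \<in> set (elist P)"
    then obtain k where k: "k < length (elist P)" "e = elist P ! k" by (auto simp: in_set_conv_nth)
    then have "Suc k < length P" by (simp add: elist_len)
    then show "e \<in> path_edges P" using k elist_nth unfolding path_edges_def by blast
  qed
  show "path_edges P \<subseteq> set (elist P)"
  proof
    fix e assume "e \<in> path_edges P"
    then obtain k where k: "Suc k < length P" "e = {P!k, P!Suc k}" unfolding path_edges_def by blast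
    then have "k < length (elist P)" "elist P ! k = e" by (simp_all add: elist_len elist_nth)
    then show "e \<in> set (elist P)" by (metis nth_mem)
  qed
qed

lemma elist_sub: "e \<in> set (elist P) \<Longrightarrow> e \<subseteq> set P"
  by (induction P rule: elist.induct) auto

lemma elist_distinct: "distinct P \<Longrightarrow> distinct (elist P)"
proof (induction P rule: elist.induct)
  case (1 p q rest)
  then show ?case using elist_sub[of "{p,q}" "q#rest"] by auto
qed auto

lemma card_cnt: "distinct P \<Longrightarrow> card (path_edges P \<inter> A) = length (filter (\<lambda>e. e \<in> A) (elist P))"
proof -
  assume "distinct P"
  then have d: "distinct (filter (\<lambda>e. e \<in> A) (elist P))" by (simp add: elist_distinct)
  have "card (set (filter (\<lambda>e. e \<in> A) (elist P))) = length (filter (\<lambda>e. e \<in> A) (elist P))"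
    using distinct_card[OF d] .
  moreover have "set (filter (\<lambda>e. e \<in> A) (elist P)) = path_edges P \<inter> A" by (auto simp: elist_set)
  ultimately show ?thesis by simp
qed

lemma diff_step: "xs \<noteq> [] \<Longrightarrow> c \<in> symdiff (f (hd xs)) (f (last xs)) \<Longrightarrow>
   \<exists>k. Suc k < length xs \<and> c \<in> symdiff (f (xs!k)) (f (xs!Suc k))"
proof (induction xs)
  case (Cons x xs)
  show ?case
  proof (cases "xs = []")
    case True then show ?thesis using Cons by (simp add: symdiff_def)
  next
    case False
    show ?thesis
    proof (cases "c \<in> symdiff (f (hd xs)) (f (last xs))")
      case True
      then obtain k where "Suc k < length xs" "c \<in> symdiff (f (xs!k)) (f (xs!Suc k))"
        using Cons.IH False by blast
      then show ?thesis by (intro exI[of _ "Suc k"]) auto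
    next
      case nc: False
      have "c \<in> symdiff (f x) (f (hd xs))" using Cons.prems False nc by (auto simp: symdiff_def)
      then show ?thesis using False by (intro exI[of _ 0]) (auto simp: hd_conv_nth)
    qed
  qed
qed simp

context Q begin

lemma walk_elist: "walk P \<Longrightarrow> set (elist P) \<subseteq> E"
  unfolding walk_def by (induction P rule: elist.induct) auto

lemma lev0: "i \<in> {0..d} \<Longrightarrow> e \<in> Ob i \<Longrightarrow> (i = 0 \<longleftrightarrow> (\<exists>p\<in>e. \<exists>q\<in>e. snd p \<noteq> snd q))"
proof (cases "i = 0")
  case True
  assume "e \<in> Ob i"
  then have "e \<in> Ob 0" using True by simp
  then obtain a x where ax: "x < r" "e = {(a,x),(a,(x+1) mod r)}" unfolding O0_iff by blast
  have ne: "x \<noteq> (x+1) mod r"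
  proof (cases "x+1 < r")
    case True then show ?thesis by simp
  next
    case False then have "x + 1 = r" using ax(1) by simp
    then show ?thesis using r3 by simp
  qed
  show ?thesis using ax(2) ne True by auto
next
  case False
  assume "e \<in> Ob i"
  then obtain a x where "e = {(a,x),(symdiff a {(i+d*x) mod n},x)}" unfolding Oi_iff[OF False] by blast
  then show ?thesis using False by auto
qed

lemma sd_comm: "symdiff a b = symdiff b a" by (auto simp: symdiff_def)

lemma flipcoord:
  assumes "{(a,x),(symdiff a {c},x)} = {(a',x'),(symdiff a' {c'},x')}"
  shows "c = c' \<and> x = x'"
proof -
  have "(a,x) \<in> {(a',x'),(symdiff a' {c'},x')}" using assms by blast
  then have xx: "x = x'" by auto
  then have "(a,x) = (a',x') \<and> (symdiff a {c},x) = (symdiff a' {c'},x') \<or>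
             (a,x) = (symdiff a' {c'},x') \<and> (symdiff a {c},x) = (a',x')"
    using assms by (simp add: doubleton_eq_iff)
  then have "{c} = {c'}"
  proof
    assume h: "(a,x) = (a',x') \<and> (symdiff a {c},x) = (symdiff a' {c'},x')"
    have ha: "a = a'" and hb: "symdiff a {c} = symdiff a' {c'}" using h by auto
    have "{c} = symdiff a (symdiff a {c})" by (simp add: sd_self)
    also have "\<dots> = symdiff a (symdiff a' {c'})" using hb by (rule arg_cong)
    also have "\<dots> = symdiff a' (symdiff a' {c'})" using ha by (rule arg_cong)
    also have "\<dots> = {c'}" by (simp add: sd_self)
    finally show ?thesis .
  next
    assume h: "(a,x) = (symdiff a' {c'},x') \<and> (symdiff a {c},x) = (a',x')"
    have ha: "a = symdiff a' {c'}" and hb: "symdiff a {c} = a'" using h by auto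
    have "{c} = symdiff a (symdiff a {c})" by (simp add: sd_self)
    also have "\<dots> = symdiff a a'" using hb by (rule arg_cong)
    also have "\<dots> = symdiff (symdiff a' {c'}) a'" using ha by simp
    also have "\<dots> = symdiff a' (symdiff a' {c'})" by (rule sd_comm)
    also have "\<dots> = {c'}" by (simp add: sd_self)
    finally show ?thesis .
  qed
  then show ?thesis using xx by simp
qed

lemma modcancel:
  assumes "(j + m) mod n = (k + (m::nat)) mod n" "1 \<le> j" "j \<le> n" "1 \<le> k" "k \<le> n"
  shows "j = k"
proof -
  obtain q1 q2 where "j + m + n*q1 = k + m + n*q2" using assms(1) nat_mod_eq_iff by blast
  then have "j + n*q1 = k + n*q2" by simp
  then have jk: "j mod n = k mod n" using nat_mod_eq_iff by blast
  show ?thesis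
  proof (cases "j = n")
    case True
    then have "k mod n = 0" using jk by simp
    then show ?thesis using assms True by (metis mod_less nat_less_le not_one_le_zero)
  next
    case False
    then have "j mod n = j" using assms by simp
    show ?thesis
    proof (cases "k = n")
      case True then show ?thesis using jk \<open>j mod n = j\<close> assms by simp
    next
      case False then show ?thesis using jk \<open>j mod n = j\<close> assms by simp
    qed
  qed
qed

lemma orbit_unique: "e \<in> E \<Longrightarrow> \<exists>!j. j \<in> {0..d} \<and> e \<in> Ob j"
proof -
  assume "e \<in> E"
  then obtain j where j: "j \<in> {0..d}" "e \<in> Ob j" unfolding E_iff by blast
  have uniq: "k = j" if k: "k \<in> {0..d}" "e \<in> Ob k" for k
  proof (rule ccontr)
    assume kj: "k \<noteq> j"
    have L1: "j = 0 \<longleftrightarrow> (\<exists>p\<in>e. \<exists>q\<in>e. snd p \<noteq> snd q)" by (rule lev0[OF j])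
    have L2: "k = 0 \<longleftrightarrow> (\<exists>p\<in>e. \<exists>q\<in>e. snd p \<noteq> snd q)" by (rule lev0[OF k])
    have j0: "j \<noteq> 0" and k0: "k \<noteq> 0" using L1 L2 kj by auto
    obtain a x where A: "e = {(a,x),(symdiff a {(j+d*x) mod n},x)}"
      using j(2) unfolding Oi_iff[OF j0] by blast
    obtain a' x' where B: "e = {(a',x'),(symdiff a' {(k+d*x') mod n},x')}"
      using k(2) unfolding Oi_iff[OF k0] by blast
    have eq: "{(a,x),(symdiff a {(j+d*x) mod n},x)} = {(a',x'),(symdiff a' {(k+d*x') mod n},x')}"
    proof -
      have "{(a,x),(symdiff a {(j+d*x) mod n},x)} = e" using A by (rule sym)
      then show ?thesis using B by (rule trans)
    qed
    have hx: "(j+d*x) mod n = (k+d*x') mod n" "x = x'" using flipcoord[OF eq] by auto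
    have "(j + d*x) mod n = (k + d*x) mod n" using hx(1) unfolding hx(2)[symmetric] .
    moreover have "1 \<le> j" "j \<le> n" "1 \<le> k" "k \<le> n" using j k j0 k0 dn by auto
    ultimately have "j = k" by (rule modcancel)
    then show False using kj by simp
  qed
  show ?thesis
  proof (rule ex1I[of _ j])
    show "j \<in> {0..d} \<and> e \<in> Ob j" using j by simp
    show "\<And>k. k \<in> {0..d} \<and> e \<in> Ob k \<Longrightarrow> k = j" using uniq by blast
  qed
qed

end



context Q begin

definition pos :: "nat \<Rightarrow> nat" where "pos c = (if c mod d = 0 then d else c mod d)"

definition flipsc :: "vert set \<Rightarrow> nat \<Rightarrow> bool" where
  "flipsc e c \<longleftrightarrow> (\<exists>p\<in>e. \<exists>q\<in>e. c \<in> fst p \<and> c \<notin> fst q)"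

lemma pos_range: "pos c \<in> {1..d}"
  using d1 unfolding pos_def by (auto simp: Suc_le_eq intro: mod_less_divisor)

lemma pos_eq: "d dvd n \<Longrightarrow> j \<in> {1..d} \<Longrightarrow> pos ((j + d*x) mod n) = j"
proof -
  assume dn': "d dvd n" and j: "j \<in> {1..d}"
  have "(j + d*x) mod n mod d = (j + d*x) mod d" using dn' by (simp add: mod_mod_cancel)
  also have "\<dots> = j mod d" by simp
  finally have m: "(j + d*x) mod n mod d = j mod d" .
  show ?thesis
  proof (cases "j = d")
    case True then show ?thesis using m unfolding pos_def by simp
  next
    case False then have "j < d" using j by auto
    then show ?thesis using m j unfolding pos_def by auto
  qed
qed

lemma flip_edge_info:
  assumes dn': "d dvd n" and e: "{p,q} \<in> E" and pV: "p \<in> V" and c: "c \<in> symdiff (fst p) (fst q)"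
  shows "{p,q} \<in> Ob (pos c) \<and> flipsc {p,q} c \<and> flipok (snd p) c"
proof -
  have fl: "flipsc {p,q} c" using c unfolding flipsc_def symdiff_def by blast
  have "\<not> (fst p = fst q)" using c by (auto simp: symdiff_def)
  then obtain c0 where h: "snd p = snd q" "flipok (snd p) c0" "fst q = symdiff (fst p) {c0}"
    using edge_cases[OF e] by blast
  have "c \<in> symdiff (fst p) (symdiff (fst p) {c0})" using c h(3) by simp
  then have cc: "c = c0" by (simp add: sd_self)
  obtain j where j: "j \<in> {1..d}" "c = (j + d * snd p) mod n" using h(2) cc unfolding flipok_def by blast
  have pj: "pos c = j" using pos_eq[OF dn' j(1)] j(2) by simp
  have j0: "j \<noteq> 0" using j by auto
  have eq: "{p,q} = {(fst p, snd p), (symdiff (fst p) {(j + d * snd p) mod n}, snd p)}"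
    using h(1,3) cc j(2) by (metis prod.collapse)
  have "fst p \<subseteq> {0..<n}" "snd p < r" using pV unfolding Qverts_def by auto
  then have "{p,q} \<in> Ob j" unfolding Oi_iff[OF j0] using eq by blast
  then show ?thesis using pj fl h(2) cc by simp
qed

lemma flipsc_unique:
  assumes e: "e \<in> E" and c: "flipsc e c" and c': "flipsc e c'"
  shows "c = c'"
proof -
  obtain j where j: "j \<in> {0..d}" "e \<in> Ob j" using e unfolding E_iff by blast
  show ?thesis
  proof (cases "j = 0")
    case True
    then have "e \<in> Ob 0" using j by simp
    then obtain a x where "e = {(a,x),(a,(x+1) mod r)}" unfolding O0_iff by blast
    then show ?thesis using c unfolding flipsc_def by auto
  next
    case False
    then obtain a x where ex: "e = {(a,x),(symdiff a {(j+d*x) mod n},x)}"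
      using j(2) unfolding Oi_iff[OF False] by blast
    have fz: "\<And>z. flipsc e z \<Longrightarrow> z = (j+d*x) mod n"
      unfolding flipsc_def ex by (auto simp: symdiff_def)
    show ?thesis using fz[OF c] fz[OF c'] by simp
  qed
qed

lemma lower:
  assumes dn': "d dvd n" and P: "is_path V E P u v" and i: "i \<in> {1..d}"
  shows "card {c \<in> symdiff (fst u) (fst v). pos c = i} \<le> length (filter (\<lambda>e. e \<in> Ob i) (elist P))"
proof -
  define D where "D = {c \<in> symdiff (fst u) (fst v). pos c = i}"
  define B where "B = set (filter (\<lambda>e. e \<in> Ob i) (elist P))"
  have Pne: "P \<noteq> []" and hu: "hd P = u" and lv: "last P = v" and PV: "set P \<subseteq> V"
    and Pe: "\<And>k. Suc k < length P \<Longrightarrow> {P!k, P!Suc k} \<in> E"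
    using P unfolding is_path_def by auto
  have ex: "\<exists>e\<in>B. flipsc e c" if cD: "c \<in> D" for c
  proof -
    have "c \<in> symdiff (fst (hd P)) (fst (last P))" using cD hu lv by (simp add: D_def)
    then obtain k where k: "Suc k < length P" "c \<in> symdiff (fst (P!k)) (fst (P!Suc k))"
      using diff_step[OF Pne, of c fst] by blast
    have "k < length P" using k(1) by simp
    then have "P!k \<in> set P" by (rule nth_mem)
    then have kV: "P!k \<in> V" using PV by blast
    have info: "{P!k, P!Suc k} \<in> Ob (pos c) \<and> flipsc {P!k, P!Suc k} c"
      using flip_edge_info[OF dn' Pe[OF k(1)] kV k(2)] by blast
    have "k < length (elist P)" using k(1) by (simp add: elist_len)
    then have "elist P ! k \<in> set (elist P)" by (rule nth_mem)
    then have "{P!k, P!Suc k} \<in> set (elist P)" using elist_nth[OF k(1)] by simp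
    then have "{P!k, P!Suc k} \<in> B" using info cD unfolding B_def D_def by simp
    then show ?thesis using info by blast
  qed
  define g where "g c = (SOME e. e \<in> B \<and> flipsc e c)" for c
  have g: "g c \<in> B \<and> flipsc (g c) c" if "c \<in> D" for c
    using someI_ex[OF ex[OF that, unfolded Bex_def]] unfolding g_def .
  have BE: "B \<subseteq> E" using walk_elist path_walk[OF P] unfolding B_def by auto
  have "inj_on g D"
  proof
    fix c c' assume cc: "c \<in> D" "c' \<in> D" "g c = g c'"
    have "g c \<in> E" using g[OF cc(1)] BE by blast
    moreover have "flipsc (g c) c" using g[OF cc(1)] by blast
    moreover have "flipsc (g c) c'" using g[OF cc(2)] cc(3) by simp
    ultimately show "c = c'" by (rule flipsc_unique)
  qed
  moreover have "g ` D \<subseteq> B" using g by auto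
  ultimately have "card D \<le> card B" by (intro card_inj_on_le) (auto simp: B_def)
  also have "\<dots> \<le> length (filter (\<lambda>e. e \<in> Ob i) (elist P))" unfolding B_def by (rule card_length)
  finally show ?thesis unfolding D_def .
qed

lemma sumpos:
  assumes "finite D"
  shows "(\<Sum>i\<in>{1..d}. card {c \<in> D. pos c = i}) = card D"
proof -
  have "D = (\<Union>i\<in>{1..d}. {c \<in> D. pos c = i})" using pos_range by auto
  then have "card D = card (\<Union>i\<in>{1..d}. {c \<in> D. pos c = i})" by simp
  also have "\<dots> = (\<Sum>i\<in>{1..d}. card {c \<in> D. pos c = i})"
    by (rule card_UN_disjoint) (use assms in auto)
  finally show ?thesis by simp
qed

lemma length_sum:
  "set es \<subseteq> E \<Longrightarrow> length es = (\<Sum>j\<in>{0..d}. length (filter (\<lambda>e. e \<in> Ob j) es))"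
proof (induction es)
  case Nil then show ?case by simp
next
  case (Cons e es)
  have eE: "e \<in> E" using Cons.prems by simp
  obtain j0 where j0: "j0 \<in> {0..d} \<and> e \<in> Ob j0" "\<And>j. j \<in> {0..d} \<and> e \<in> Ob j \<Longrightarrow> j = j0"
    using orbit_unique[OF eE] by (elim ex1E) blast
  have one: "(\<Sum>j\<in>{0..d}. (if e \<in> Ob j then 1 else 0::nat)) = 1"
  proof -
    have "(\<Sum>j\<in>{0..d}. (if e \<in> Ob j then 1 else 0::nat)) = (\<Sum>j\<in>{0..d}. (if j = j0 then 1 else 0))"
    proof (rule sum.cong)
      fix j assume jd: "j \<in> {0..d}"
      show "(if e \<in> Ob j then 1 else 0) = (if j = j0 then 1 else (0::nat))"
      proof (cases "j = j0")
        case True then show ?thesis using j0(1) by simp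
      next
        case False
        have "e \<notin> Ob j"
        proof
          assume "e \<in> Ob j" then have "j = j0" using j0(2) jd by blast
          then show False using False by simp
        qed
        then show ?thesis using False by simp
      qed
    qed simp
    also have "\<dots> = 1" using j0(1) by (simp add: sum.delta)
    finally show ?thesis .
  qed
  have "(\<Sum>j\<in>{0..d}. length (filter (\<lambda>e. e \<in> Ob j) (e#es))) =
        (\<Sum>j\<in>{0..d}. (if e \<in> Ob j then 1 else 0) + length (filter (\<lambda>e. e \<in> Ob j) es))"
    by (rule sum.cong) auto
  also have "\<dots> = 1 + length es" using Cons one by (simp add: sum.distrib)
  finally show ?case by simp
qed

end



context Q begin

lemma prop_dvd:
  assumes dn': "d dvd n"
  shows "orbit_proportional V E {0..d} Ob"
  unfolding orbit_proportional_def
proof (intro allI impI ballI)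
  fix u v P P' i
  assume sP: "is_shortest_path V E P u v" and P': "is_path V E P' u v" and i: "i \<in> {0..d}"
  have P: "is_path V E P u v" using sP unfolding is_shortest_path_def by blast
  have short: "\<And>Q. is_path V E Q u v \<Longrightarrow> length P \<le> length Q"
    using sP unfolding is_shortest_path_def by blast
  define D where "D = symdiff (fst u) (fst v)"
  define cnt where "cnt Q j = length (filter (\<lambda>e. e \<in> Ob j) (elist Q))" for Q j
  have Pne: "P \<noteq> []" and hP: "hd P = u" "last P = v" and PV: "set P \<subseteq> V"
    using P unfolding is_path_def by auto
  have uV: "u \<in> V" using hP(1) Pne PV by (metis hd_in_set subsetD)
  have vV: "v \<in> V" using hP(2) Pne PV by (metis last_in_set subsetD)
  have fu: "fst u \<subseteq> {0..<n}" "fst v \<subseteq> {0..<n}" using uV vV unfolding Qverts_def by auto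
  have finD: "finite D" unfolding D_def symdiff_def
    using fu by (meson finite_Diff finite_UnI finite_atLeastLessThan finite_subset)
  have R: "length P \<le> 1 + cnt Q 0 + card D" if Q: "is_path V E Q u v" for Q
  proof -
    have wQ: "walk Q" and hQ: "hd Q = u" "last Q = v" using path_walk[OF Q] by auto
    have Qne: "Q \<noteq> []" and QV: "set Q \<subseteq> V"
      and Qe: "\<And>k. Suc k < length Q \<Longrightarrow> {Q!k, Q!Suc k} \<in> E"
      using Q unfolding is_path_def by auto
    have fl: "\<forall>c\<in>D. \<exists>p\<in>set Q. flipok (snd p) c"
    proof
      fix c assume "c \<in> D"
      then have "c \<in> symdiff (fst (hd Q)) (fst (last Q))" using hQ by (simp add: D_def)
      then obtain k where k: "Suc k < length Q" "c \<in> symdiff (fst (Q!k)) (fst (Q!Suc k))"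
        using diff_step[OF Qne, of c fst] by blast
      have "k < length Q" using k(1) by simp
      then have kQ: "Q!k \<in> set Q" by (rule nth_mem)
      then have "Q!k \<in> V" using QV by blast
      then have "flipok (snd (Q!k)) c" using flip_edge_info[OF dn' Qe[OF k(1)] _ k(2)] by blast
      then show "\<exists>p\<in>set Q. flipok (snd p) c" using kQ by blast
    qed
    obtain W where W: "walk W" "hd W = (fst u, snd (hd Q))" "last W = (symdiff (fst u) D, snd (last Q))"
      "length W \<le> 1 + length (filter (\<lambda>e. e \<in> Ob 0) (elist Q)) + card D"
      using key[OF wQ finD fl fu(1)] by blast
    have "hd W = u" using W(2) hQ by simp
    moreover have "last W = v" using W(3) hQ by (simp add: D_def sd_self)
    ultimately obtain P2 where P2: "is_path V E P2 u v" "length P2 \<le> length W"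
      using walk_path[OF W(1)] by metis
    have "length P \<le> length P2" using short[OF P2(1)] .
    then show ?thesis using P2(2) W(4) unfolding cnt_def by simp
  qed
  have low: "card {c \<in> D. pos c = j} \<le> cnt Q j" if "is_path V E Q u v" "j \<in> {1..d}" for Q j
    using lower[OF dn' that] unfolding D_def cnt_def .
  have L: "length P = 1 + (\<Sum>j\<in>{0..d}. cnt P j)"
  proof -
    have "set (elist P) \<subseteq> E" using walk_elist path_walk[OF P] by blast
    then have "length (elist P) = (\<Sum>j\<in>{0..d}. cnt P j)" unfolding cnt_def by (rule length_sum)
    then show ?thesis using Pne elist_len[of P] by (cases P) auto
  qed
  have split: "(\<Sum>j\<in>{0..d}. cnt P j) = cnt P 0 + (\<Sum>j\<in>{1..d}. cnt P j)"
    by (simp add: sum.atLeast_Suc_atMost)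
  have sD: "(\<Sum>j\<in>{1..d}. card {c \<in> D. pos c = j}) = card D" using sumpos[OF finD] .
  have lowsum: "(\<Sum>j\<in>{1..d}. card {c \<in> D. pos c = j}) \<le> (\<Sum>j\<in>{1..d}. cnt P j)"
    by (rule sum_mono) (rule low[OF P])
  have cP: "card (path_edges P \<inter> Ob i) = cnt P i"
    using card_cnt P unfolding is_path_def cnt_def by blast
  have cP': "card (path_edges P' \<inter> Ob i) = cnt P' i"
    using card_cnt P' unfolding is_path_def cnt_def by blast
  show "card (path_edges P \<inter> Ob i) \<le> card (path_edges P' \<inter> Ob i)"
  proof (cases "i = 0")
    case True
    have "length P \<le> 1 + cnt P' 0 + card D" using R[OF P'] .
    then show ?thesis using True cP cP' L split lowsum sD by simp
  next
    case False
    then have i1: "i \<in> {1..d}" using i by auto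
    have "length P \<le> 1 + cnt P 0 + card D" using R[OF P] .
    then have s1: "(\<Sum>j\<in>{1..d}. cnt P j) \<le> card D" using L split by simp
    have a: "(\<Sum>j\<in>{1..d}. cnt P j) = cnt P i + (\<Sum>j\<in>{1..d}-{i}. cnt P j)"
      using i1 by (simp add: sum.remove)
    have b: "(\<Sum>j\<in>{1..d}. card {c \<in> D. pos c = j}) =
             card {c \<in> D. pos c = i} + (\<Sum>j\<in>{1..d}-{i}. card {c \<in> D. pos c = j})"
      using i1 by (simp add: sum.remove)
    have c: "(\<Sum>j\<in>{1..d}-{i}. card {c \<in> D. pos c = j}) \<le> (\<Sum>j\<in>{1..d}-{i}. cnt P j)"
      by (rule sum_mono) (rule low[OF P], simp)
    have "cnt P i \<le> card {c \<in> D. pos c = i}" using s1 a b c sD by linarith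
    also have "\<dots> \<le> cnt P' i" using low[OF P' i1] .
    finally show ?thesis using cP cP' by simp
  qed
qed

end



context Q begin

lemma level_exists:
  assumes ndvd: "\<not> d dvd n" and dr: "(d*r) mod n = 0"
  shows "\<exists>g x0. 1 \<le> g \<and> g < d \<and> x0 < r \<and> (d*x0) mod n = n - g"
proof -
  define g where "g = gcd d n"
  have g1: "1 \<le> g" using d1 unfolding g_def by (simp add: Suc_le_eq)
  have gd: "g \<le> d" using d1 unfolding g_def by (simp add: gcd_le1_nat)
  have "g \<noteq> d" using ndvd unfolding g_def by (metis gcd_dvd2)
  then have gd': "g < d" using gd by simp
  have gn: "g < n" using gd' dn by simp
  obtain x y where xy: "d*x = n*y + g" using bezout_nat[of d n] d1 unfolding g_def by auto
  define x1 where "x1 = x*(n-1)"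
  define x0 where "x0 = x1 mod r"
  have x0r: "x0 < r" using r3 unfolding x0_def by simp
  obtain g' where g': "g = Suc g'" using g1 by (cases g) auto
  have e1: "g*(n-1) + g = g*n" using n2 by (cases n) auto
  have e2: "n*g' + (n-g) + g = g*n" using gn g' by simp
  have gg: "g*(n-1) = n*g' + (n - g)" using e1 e2 by linarith
  have "d*x1 = (d*x)*(n-1)" unfolding x1_def by (simp add: mult.assoc)
  also have "\<dots> = (n*y+g)*(n-1)" using xy by simp
  also have "\<dots> = n*(y*(n-1)) + g*(n-1)" by (simp add: distrib_right mult.assoc)
  also have "\<dots> = n*(y*(n-1)) + (n*g' + (n-g))" using gg by simp
  also have "\<dots> = n*(y*(n-1)+g') + (n-g)" by (simp add: distrib_left)
  finally have "d*x1 = n*(y*(n-1)+g') + (n-g)" .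
  then have dK: "d*x1 = (n-g) + n*(y*(n-1)+g')" by linarith
  have "(d*x1) mod n = ((n-g) + n*(y*(n-1)+g')) mod n" using dK by (rule arg_cong)
  also have "\<dots> = (n-g) mod n" by (rule mod_mult_self2)
  also have "\<dots> = n - g" using gn g1 by simp
  finally have m1: "(d*x1) mod n = n - g" .
  have "x1 = x0 + r*(x1 div r)" unfolding x0_def using mod_mult_div_eq[of x1 r] by simp
  then have "d*x1 = d*(x0 + r*(x1 div r))" by simp
  also have "\<dots> = d*x0 + (d*r)*(x1 div r)" by (simp add: distrib_left mult.assoc)
  finally have dx1: "d*x1 = d*x0 + (d*r)*(x1 div r)" .
  have "n dvd d*r" using dr by (simp add: dvd_eq_mod_eq_0)
  then have "n dvd (d*r)*(x1 div r)" by simp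
  then obtain k where k: "(d*r)*(x1 div r) = n*k" by blast
  have "(d*x0) mod n = (d*x0 + n*k) mod n" by simp
  also have "\<dots> = (d*x1) mod n" using dx1 k by simp
  finally have "(d*x0) mod n = n - g" using m1 by simp
  then show ?thesis using g1 gd' x0r by blast
qed

end



context Q begin

lemma not_prop:
  assumes ndvd: "\<not> d dvd n" and dr: "(d*r) mod n = 0"
  shows "\<not> orbit_proportional V E {0..d} Ob"
proof
  assume op: "orbit_proportional V E {0..d} Ob"
  obtain g x0 where gx: "1 \<le> g" "g < d" "x0 < r" "(d*x0) mod n = n - g"
    using level_exists[OF ndvd dr] by blast
  define u where "u = ({}::nat set, 0::nat)"
  define v where "v = ({1::nat}, 0::nat)"
  define f where "f k = (if k \<le> x0 then ({}::nat set, k) else ({1}, 2*x0+1-k))" for k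
  define P' where "P' = map f [0..<2*x0+2]"
  have n1: "1 < n" using n2 by simp
  have sd1: "\<And>c. symdiff {} {c::nat} = {c}" by (simp add: symdiff_def)
  have e1: "{u,v} \<in> Ob 1"
    unfolding Oi_iff[of 1, OF one_neq_zero]
    by (rule exI[of _ "{}"], rule exI[of _ 0]) (use n1 r3 in \<open>auto simp: u_def v_def symdiff_def\<close>)
  have e1E: "{u,v} \<in> E" unfolding E_iff using e1 d1 by (intro bexI[of _ 1]) auto
  have uV: "u \<in> V" and vV: "v \<in> V" using n1 r3 by (auto simp: u_def v_def Qverts_def)
  have uv: "u \<noteq> v" by (simp add: u_def v_def)
  have P: "is_path V E [u,v] u v"
  proof -
    have "\<forall>k. Suc k < length [u,v] \<longrightarrow> {[u,v]!k, [u,v]!Suc k} \<in> E" using e1E by (auto simp: less_Suc_eq)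
    then show ?thesis unfolding is_path_def using uV vV uv by auto
  qed
  have sP: "is_shortest_path V E [u,v] u v"
    unfolding is_shortest_path_def
  proof (intro conjI allI impI)
    show "is_path V E [u,v] u v" by (rule P)
    fix Q assume Q: "is_path V E Q u v"
    then have Qne: "Q \<noteq> []" and "hd Q = u" "last Q = v" unfolding is_path_def by auto
    show "length [u,v] \<le> length Q"
    proof (rule ccontr)
      assume "\<not> length [u,v] \<le> length Q"
      then have lq: "length Q < 2" by simp
      obtain w ys where wy: "Q = w # ys" using Qne by (cases Q) auto
      then have "ys = []" using lq by simp
      then have "Q = [w]" using wy by simp
      then show False using \<open>hd Q = u\<close> \<open>last Q = v\<close> uv by simp
    qed
  qed
  have nthP: "P' ! k = f k" if "k < 2*x0+2" for k using that unfolding P'_def by (simp del: upt_Suc)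
  have lenP: "length P' = 2*x0+2" unfolding P'_def by (simp del: upt_Suc)
  have fl0: "(1 + g + d*x0) mod n = 1"
  proof -
    have "(1 + g + d*x0) mod n = (1 + g + (d*x0) mod n) mod n" by (rule mod_add_right_eq[symmetric])
    also have "\<dots> = (n + 1) mod n" using gx(4) gx(2) dn by simp
    also have "\<dots> = 1 mod n" by (rule mod_add_self1)
    also have "\<dots> = 1" using n1 by simp
    finally show ?thesis .
  qed
  have fl: "flipok x0 1" unfolding flipok_def using gx(1,2) fl0 by (intro bexI[of _ "1+g"]) auto
  have P'path: "is_path V E P' u v"
    unfolding is_path_def
  proof (intro conjI allI impI)
    show "P' \<noteq> []" using lenP by auto
    have Pne: "P' \<noteq> []" using lenP by auto
    have "hd P' = P'!0" using Pne by (rule hd_conv_nth)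
    then show "hd P' = u" using nthP[of 0] by (simp add: f_def u_def)
    have "last P' = P'!(length P' - 1)" using Pne by (rule last_conv_nth)
    then show "last P' = v" using nthP[of "2*x0+1"] lenP by (simp add: f_def v_def)
    have "inj_on f {0..<2*x0+2}" unfolding inj_on_def f_def by auto
    then show "distinct P'" unfolding P'_def by (simp add: distinct_map del: upt_Suc)
    show "set P' \<subseteq> V" unfolding P'_def f_def using gx(3) n1 by (auto simp: Qverts_def simp del: upt_Suc)
    fix k assume k: "Suc k < length P'"
    then have kk: "Suc k < 2*x0+2" using lenP by simp
    have eq: "{P'!k, P'!Suc k} = {f k, f (Suc k)}" using nthP kk by simp
    show "{P'!k, P'!Suc k} \<in> E"
    proof (cases "k < x0")
      case True
      then have "{f k, f (Suc k)} = {({},k),({},(k+1) mod r)}" using gx(3) by (simp add: f_def)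
      moreover have "{({},k),({},(k+1) mod r)} \<in> E" using hor_edgeE[of "{}" k] True gx(3) by simp
      ultimately show ?thesis using eq by simp
    next
      case False
      show ?thesis
      proof (cases "k = x0")
        case True
        then have "{f k, f (Suc k)} = {({},x0),(symdiff {} {1},x0)}" by (simp add: f_def sd1)
        moreover have "{({},x0),(symdiff {} {1},x0)} \<in> E" using flip_edge[of "{}" x0 1] gx(3) fl by simp
        ultimately show ?thesis using eq by simp
      next
        case False
        then have kx: "x0 < k" using \<open>\<not> k < x0\<close> by simp
        define z where "z = 2*x0 - k"
        have z: "z + 1 \<le> x0" "2*x0+1-k = z+1" "2*x0+1-Suc k = z" using kx kk unfolding z_def by auto
        have "{f k, f (Suc k)} = {({1},z),({1},(z+1) mod r)}"
          using kx z gx(3) by (auto simp: f_def)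
        moreover have "{({1},z),({1},(z+1) mod r)} \<in> E" using hor_edgeE[of "{1}" z] z gx(3) n1 by simp
        ultimately show ?thesis using eq by simp
      qed
    qed
  qed
  have c1: "card (path_edges [u,v] \<inter> Ob 1) = 1"
  proof -
    have "path_edges [u,v] = {{u,v}}" unfolding path_edges_def by (auto simp: less_Suc_eq)
    then show ?thesis using e1 by simp
  qed
  have c0: "path_edges P' \<inter> Ob 1 = {}"
  proof (rule ccontr)
    assume "path_edges P' \<inter> Ob 1 \<noteq> {}"
    then obtain e where e: "e \<in> path_edges P'" "e \<in> Ob 1" by blast
    obtain k where k: "Suc k < length P'" "e = {P'!k, P'!Suc k}" using e(1) unfolding path_edges_def by blast
    then have kk: "Suc k < 2*x0+2" using lenP by simp
    have ef: "e = {f k, f (Suc k)}" using k nthP kk by simp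
    obtain a x where ax: "e = {(a,x),(symdiff a {(1+d*x) mod n},x)}"
      using e(2) unfolding Oi_iff[of 1, OF one_neq_zero] by blast
    have "snd (f k) = x" "snd (f (Suc k)) = x" using ef ax by (metis insertCI insertE singletonD snd_conv)+
    then have sk: "snd (f k) = snd (f (Suc k))" by simp
    have kx0: "k = x0"
    proof (rule ccontr)
      assume "k \<noteq> x0"
      then show False using sk kk by (auto simp: f_def split: if_splits)
    qed
    have "e = {({},x0),(symdiff {} {1},x0)}" using ef kx0 by (simp add: f_def sd1)
    then have "{({},x0),(symdiff {} {1},x0)} = {(a,x),(symdiff a {(1+d*x) mod n},x)}" using ax by simp
    then have fc: "1 = (1+d*x) mod n \<and> x0 = x" by (rule flipcoord)
    have h1: "1 = (1+d*x) mod n" using fc by (rule conjunct1)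
    have h2: "x0 = x" using fc by (rule conjunct2)
    have "(1 + d*x0) mod n = 1" using h1 unfolding h2[symmetric] by (rule sym)
    moreover have "(1 + g + d*x0) mod n = 1" by (rule fl0)
    ultimately have "(1 + g + d*x0) mod n = (1 + d*x0) mod n" by simp
    then have "1 + g = 1" by (rule modcancel) (use gx dn in auto)
    then show False using gx(1) by simp
  qed
  have "card (path_edges [u,v] \<inter> Ob 1) \<le> card (path_edges P' \<inter> Ob 1)"
  proof -
    have "\<forall>i\<in>{0..d}. card (path_edges [u,v] \<inter> Ob i) \<le> card (path_edges P' \<inter> Ob i)"
      using op sP P'path unfolding orbit_proportional_def by blast
    moreover have "(1::nat) \<in> {0..d}" using d1 by simp
    ultimately show ?thesis by blast
  qed
  then show False using c1 c0 by simp
qed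

end


theorem mainTheorem17:
  fixes n d r :: nat
  assumes "n \<ge> 2" and "d \<ge> 1" and "r \<ge> 3" and "n \<ge> d" and "(d * r) mod n = 0"
  shows "Q_G_orbit_proportional n d r \<longleftrightarrow> n mod d = 0"
proof -
  interpret Q n d r using assms by unfold_locales auto
  have eq: "Q_G_orbit_proportional n d r = orbit_proportional (Qverts n r) (Qedges n d r) {0..d} (Qorbit n d r)"
    unfolding Q_G_orbit_proportional_def ..
  show ?thesis
  proof (cases "d dvd n")
    case True
    then show ?thesis using eq prop_dvd[OF True] by (simp add: dvd_eq_mod_eq_0)
  next
    case False
    then show ?thesis using eq not_prop[OF False assms(5)] by (simp add: dvd_eq_mod_eq_0)
  qed
qed

end
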